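(* Let $S_X,S_Y$ be finite nonempty action sets, $\varphi:S_X\times S_Y\to\mathbb{R}$, $\lambda\in[0,1)$, and let $\tau_X^+,\tau_X^-\in\Delta(S_X)$ satisfy $\max_{s_Y}\varphi(\tau_X^-,s_Y)\le0\le\min_{s_Y}\varphi(\tau_X^+,s_Y)$ together with $$\min_{s_Y}\varphi(\tau_X^+,s_Y)\ge(1-\lambda)\max_{s_Y}\varphi(\tau_X^+,s_Y)+\lambda\max_{s_Y}\varphi(\tau_X^-,s_Y),$$ $$\max_{s_Y}\varphi(\tau_X^-,s_Y)\le\lambda\min_{s_Y}\varphi(\tau_X^+,s_Y)+(1-\lambda)\min_{s_Y}\varphi(\tau_X^-,s_Y).$$ Then $X$ can enforce $\varphi\equiv0$ using a two-point reactive learning strategy (mixing $\tau_X^+$ and $\tau_X^-$), i.e., there is a $(\varphi,\lambda)$-autocratic two-point reactive learning strategy.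
   Context: Two players $X,Y$ play a repeated game with finite action sets $S_X,S_Y$; $\Delta(S)$ denotes the probability distributions on $S$; $\varphi(\tau_X,s_Y)=\mathbb{E}_{s_X\sim\tau_X}[\varphi(s_X,s_Y)]$; maxima/minima over $s_Y$ are over $S_Y$. Histories: $\mathcal{H}=\bigcup_{T\ge0}(S_X\times S_Y)^T$; behavioral strategies are maps $\sigma:\mathcal{H}\to\Delta(S)$; players independently draw actions each round from their strategies evaluated at the history of realized action pairs, with $\mathbb{E}_{\sigma_X,\sigma_Y}$ the expectation over the resulting play. $\sigma_X$ is $(\varphi,\lambda)$-autocratic if for every behavioral strategy $\sigma_Y$ of $Y$, $\mathbb{E}_{\sigma_X,\sigma_Y}[(1-\lambda)\sum_{t\ge0}\lambda^t\varphi(s_X^t,s_Y^t)]=0$. A two-point reactive learning strategy mixing $\tau_X^+,\tau_X^-$ is given by $p_0\in[0,1]$ and $p^*:[0,1]\times S_Y\to[0,1]$: it plays $p_0\tau_X^++(1-p_0)\tau_X^-$ in round $0$ and, if it played $p\tau_X^++(1-p)\tau_X^-$ in round $t$ and $Y$ played $s_Y$, it plays $p^*[p,s_Y]\tau_X^++(1-p^*[p,s_Y])\tau_X^-$ in round $t+1$. *)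

theory Defs
  imports "HOL-Probability.Probability"
begin

text \<open>Action sets are finite (nonempty) types 'a = S_X and 'b = S_Y.
 Mixed actions are pmfs; histories are lists of realized action pairs;
 a behavioral strategy maps histories to mixed actions.\<close>

type_synonym ('a,'b) history = "('a \<times> 'b) list"

definition payoff_mixed :: "('a \<Rightarrow> 'b \<Rightarrow> real) \<Rightarrow> 'a pmf \<Rightarrow> 'b \<Rightarrow> real" where
  "payoff_mixed \<phi> \<tau> sY = measure_pmf.expectation \<tau> (\<lambda>sX. \<phi> sX sY)"

fun hist_pmf :: "(('a,'b) history \<Rightarrow> 'a pmf) \<Rightarrow> (('a,'b) history \<Rightarrow> 'b pmf)
    \<Rightarrow> nat \<Rightarrow> ('a,'b) history pmf" where
  "hist_pmf \<sigma>X \<sigma>Y 0 = return_pmf []"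
| "hist_pmf \<sigma>X \<sigma>Y (Suc n) =
     bind_pmf (hist_pmf \<sigma>X \<sigma>Y n) (\<lambda>h.
     bind_pmf (\<sigma>X h) (\<lambda>sX.
     bind_pmf (\<sigma>Y h) (\<lambda>sY. return_pmf (h @ [(sX, sY)]))))"

definition round_pmf :: "(('a,'b) history \<Rightarrow> 'a pmf) \<Rightarrow> (('a,'b) history \<Rightarrow> 'b pmf)
    \<Rightarrow> nat \<Rightarrow> ('a \<times> 'b) pmf" where
  "round_pmf \<sigma>X \<sigma>Y t = map_pmf last (hist_pmf \<sigma>X \<sigma>Y (Suc t))"

text \<open>Expected discounted payoff: (1-\<lambda>) \<Sum> \<lambda>^t E[\<phi>(s_X^t,s_Y^t)]
  (expectation and the series are interchanged; \<phi> is bounded).\<close>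
definition discounted_value :: "('a \<Rightarrow> 'b \<Rightarrow> real) \<Rightarrow> real \<Rightarrow>
    (('a,'b) history \<Rightarrow> 'a pmf) \<Rightarrow> (('a,'b) history \<Rightarrow> 'b pmf) \<Rightarrow> real" where
  "discounted_value \<phi> \<delta> \<sigma>X \<sigma>Y =
     (1 - \<delta>) * (\<Sum>t. \<delta> ^ t * measure_pmf.expectation (round_pmf \<sigma>X \<sigma>Y t) (\<lambda>(sX, sY). \<phi> sX sY))"

definition autocratic :: "('a \<Rightarrow> 'b \<Rightarrow> real) \<Rightarrow> real \<Rightarrow> (('a,'b) history \<Rightarrow> 'a pmf) \<Rightarrow> bool" where
  "autocratic \<phi> \<delta> \<sigma>X \<longleftrightarrow> (\<forall>\<sigma>Y :: ('a,'b) history \<Rightarrow> 'b pmf. discounted_value \<phi> \<delta> \<sigma>X \<sigma>Y = 0)"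

definition mix2 :: "real \<Rightarrow> 'a pmf \<Rightarrow> 'a pmf \<Rightarrow> 'a pmf" where
  "mix2 p \<tau>p \<tau>m = bind_pmf (bernoulli_pmf p) (\<lambda>b. if b then \<tau>p else \<tau>m)"

definition rl_weight :: "real \<Rightarrow> (real \<Rightarrow> 'b \<Rightarrow> real) \<Rightarrow> ('a,'b) history \<Rightarrow> real" where
  "rl_weight p0 pstar h = foldl (\<lambda>p (sX, sY). pstar p sY) p0 h"

definition two_point_rl :: "'a pmf \<Rightarrow> 'a pmf \<Rightarrow> real \<Rightarrow> (real \<Rightarrow> 'b \<Rightarrow> real)
    \<Rightarrow> ('a,'b) history \<Rightarrow> 'a pmf" where
  "two_point_rl \<tau>p \<tau>m p0 pstar h = mix2 (rl_weight p0 pstar h) \<tau>p \<tau>m"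

end

theory Submission imports Defs begin

lemma pmf_integrable_bound:
  fixes f :: "'x \<Rightarrow> real"
  assumes "\<And>x. \<bar>f x\<bar> \<le> B"
  shows "integrable (measure_pmf M) f"
  by (rule measure_pmf.integrable_const_bound[where B=B]) (use assms in auto)

lemma pmf_exp_bound:
  fixes f :: "'x \<Rightarrow> real"
  assumes "\<And>x. \<bar>f x\<bar> \<le> B"
  shows "\<bar>measure_pmf.expectation M f\<bar> \<le> B"
proof -
  have "\<bar>measure_pmf.expectation M f\<bar> \<le> measure_pmf.expectation M (\<lambda>x. \<bar>f x\<bar>)"
    by (rule integral_abs_bound)
  also have "\<dots> \<le> measure_pmf.expectation M (\<lambda>x. B)"
    by (rule integral_mono) (use assms pmf_integrable_bound[of "\<lambda>x. \<bar>f x\<bar>" B] in auto)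
  finally show ?thesis by simp
qed

lemma pmf_exp_bind:
  fixes f :: "'y \<Rightarrow> real"
  assumes "\<And>x. \<bar>f x\<bar> \<le> B"
  shows "measure_pmf.expectation (bind_pmf M N) f
       = measure_pmf.expectation M (\<lambda>x. measure_pmf.expectation (N x) f)"
  unfolding measure_pmf_bind
  by (rule integral_bind[where K="count_space UNIV" and B=B and B'=1])
     (use assms in \<open>auto simp: measure_pmf.emeasure_space_1 measure_pmf_in_subprob_algebra\<close>)

lemma pmf_exp_finite:
  fixes f :: "'x::finite \<Rightarrow> real"
  shows "measure_pmf.expectation M f = (\<Sum>a\<in>UNIV. f a * pmf M a)"
  by (rule integral_measure_pmf_real) auto

lemma exp_hist_step:
  fixes f :: "('a,'b) history \<Rightarrow> real"
  assumes b: "\<And>x. \<bar>f x\<bar> \<le> B"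
  shows "measure_pmf.expectation (hist_pmf \<sigma>X \<sigma>Y (Suc n)) f
    = measure_pmf.expectation (hist_pmf \<sigma>X \<sigma>Y n) (\<lambda>h. measure_pmf.expectation (\<sigma>X h)
        (\<lambda>a. measure_pmf.expectation (\<sigma>Y h) (\<lambda>b. f (h @ [(a,b)]))))"
  by (simp add: pmf_exp_bind[OF b] expectation_return_pmf)

lemma telescoping_autocratic:
  fixes \<phi> :: "'a \<Rightarrow> 'b \<Rightarrow> real" and V :: "('a,'b) history \<Rightarrow> real"
  assumes d0: "0 \<le> \<delta>" and d1: "\<delta> < 1"
    and Bphi: "\<And>a b. \<bar>\<phi> a b\<bar> \<le> B"
    and BV: "\<And>h. \<bar>V h\<bar> \<le> C"
    and V0: "V [] = 0"
    and step: "\<And>h (q::'b pmf). (1-\<delta>) * measure_pmf.expectation (\<sigma>X h) (\<lambda>a. measure_pmf.expectation q (\<lambda>b. \<phi> a b))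
        + \<delta> * measure_pmf.expectation (\<sigma>X h) (\<lambda>a. measure_pmf.expectation q (\<lambda>b. V (h @ [(a,b)]))) = V h"
  shows "autocratic \<phi> \<delta> \<sigma>X"
  unfolding autocratic_def
proof
  fix \<sigma>Y :: "('a,'b) history \<Rightarrow> 'b pmf"
  define W where "W t = measure_pmf.expectation (hist_pmf \<sigma>X \<sigma>Y t) V" for t
  define E where "E t = measure_pmf.expectation (round_pmf \<sigma>X \<sigma>Y t) (\<lambda>(sX, sY). \<phi> sX sY)" for t
  have Bl: "\<bar>(case last h of (a, b) \<Rightarrow> \<phi> a b)\<bar> \<le> B" for h
    using Bphi by (auto split: prod.splits)
  have key: "(1-\<delta>) * E t + \<delta> * W (Suc t) = W t" for t
  proof -
    have E1: "E t = measure_pmf.expectation (hist_pmf \<sigma>X \<sigma>Y t) (\<lambda>h. measure_pmf.expectation (\<sigma>X h)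
        (\<lambda>a. measure_pmf.expectation (\<sigma>Y h) (\<lambda>b. \<phi> a b)))"
      unfolding E_def round_pmf_def integral_map_pmf
      by (subst exp_hist_step[OF Bl]) simp
    have W1: "W (Suc t) = measure_pmf.expectation (hist_pmf \<sigma>X \<sigma>Y t) (\<lambda>h. measure_pmf.expectation (\<sigma>X h)
        (\<lambda>a. measure_pmf.expectation (\<sigma>Y h) (\<lambda>b. V (h @ [(a,b)]))))"
      unfolding W_def by (rule exp_hist_step[OF BV])
    have i1: "integrable (measure_pmf (hist_pmf \<sigma>X \<sigma>Y t)) (\<lambda>h. measure_pmf.expectation (\<sigma>X h)
        (\<lambda>a. measure_pmf.expectation (\<sigma>Y h) (\<lambda>b. \<phi> a b)))"
      by (rule pmf_integrable_bound[where B=B]) (intro pmf_exp_bound Bphi)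
    have i2: "integrable (measure_pmf (hist_pmf \<sigma>X \<sigma>Y t)) (\<lambda>h. measure_pmf.expectation (\<sigma>X h)
        (\<lambda>a. measure_pmf.expectation (\<sigma>Y h) (\<lambda>b. V (h @ [(a,b)]))))"
      by (rule pmf_integrable_bound[where B=C]) (intro pmf_exp_bound BV)
    have "(1-\<delta>) * E t + \<delta> * W (Suc t) = measure_pmf.expectation (hist_pmf \<sigma>X \<sigma>Y t)
       (\<lambda>h. (1-\<delta>) * measure_pmf.expectation (\<sigma>X h)
        (\<lambda>a. measure_pmf.expectation (\<sigma>Y h) (\<lambda>b. \<phi> a b)) + \<delta> * measure_pmf.expectation (\<sigma>X h)
        (\<lambda>a. measure_pmf.expectation (\<sigma>Y h) (\<lambda>b. V (h @ [(a,b)]))))"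
      unfolding E1 W1 using i1 i2 by simp
    also have "\<dots> = W t" unfolding W_def step ..
    finally show ?thesis .
  qed
  have W0: "W 0 = 0" by (simp add: W_def V0 expectation_return_pmf)
  have BW: "\<bar>W t\<bar> \<le> C" for t unfolding W_def by (rule pmf_exp_bound[OF BV])
  have lim: "(\<lambda>n. \<delta>^n * W n) \<longlonglongrightarrow> 0"
  proof (rule Lim_null_comparison)
    show "\<forall>\<^sub>F n in sequentially. norm (\<delta>^n * W n) \<le> \<delta>^n * C"
      proof (rule always_eventually, rule allI)
      fix n show "norm (\<delta>^n * W n) \<le> \<delta>^n * C"
        using BW[of n] d0 by (simp add: abs_mult mult_left_mono)
    qed
    show "(\<lambda>n. \<delta>^n * C) \<longlonglongrightarrow> 0"
      by (rule tendsto_mult_left_zero, rule LIMSEQ_power_zero) (use d0 d1 in auto)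
  qed
  have "(\<lambda>n. \<delta>^n * W n - \<delta>^Suc n * W (Suc n)) sums (\<delta>^0 * W 0 - 0)"
    by (rule telescope_sums'[OF lim])
  moreover have "\<delta>^n * W n - \<delta>^Suc n * W (Suc n) = (1-\<delta>) * (\<delta>^n * E n)" for n
  proof -
    have "\<delta>^n * W n - \<delta>^Suc n * W (Suc n) = \<delta>^n * (W n - \<delta> * W (Suc n))"
      by (simp add: algebra_simps)
    also have "W n - \<delta> * W (Suc n) = (1-\<delta>) * E n" using key[of n] by linarith
    finally show ?thesis by simp
  qed
  ultimately have "(\<lambda>n. (1-\<delta>) * (\<delta>^n * E n)) sums 0" using W0 by simp
  hence "(\<lambda>n. (1-\<delta>) * (\<delta>^n * E n)) sums ((1-\<delta>) * 0)" by simp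
  hence "(\<lambda>n. \<delta>^n * E n) sums 0" using d1 by (subst (asm) sums_mult_iff) auto
  thus "discounted_value \<phi> \<delta> \<sigma>X \<sigma>Y = 0"
    unfolding discounted_value_def E_def[symmetric] by (simp add: sums_iff)
qed


lemma exp_mix2:
  fixes f :: "'a::finite \<Rightarrow> real"
  assumes "0 \<le> p" "p \<le> 1"
  shows "measure_pmf.expectation (mix2 p \<tau>p \<tau>m) f
     = p * measure_pmf.expectation \<tau>p f + (1-p) * measure_pmf.expectation \<tau>m f"
proof -
  have b: "\<bar>f x\<bar> \<le> (\<Sum>a\<in>UNIV. \<bar>f a\<bar>)" for x
    by (rule member_le_sum) auto
  show ?thesis unfolding mix2_def pmf_exp_bind[OF b] using assms by simp
qed

lemma exp_swap:
  fixes g :: "'a::finite \<Rightarrow> 'b::finite \<Rightarrow> real"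
  shows "measure_pmf.expectation M (\<lambda>a. measure_pmf.expectation q (\<lambda>b. g a b))
       = measure_pmf.expectation q (\<lambda>b. measure_pmf.expectation M (\<lambda>a. g a b))"
proof -
  have "(\<Sum>a\<in>UNIV. (\<Sum>b\<in>UNIV. g a b * pmf q b) * pmf M a)
      = (\<Sum>a\<in>UNIV. \<Sum>b\<in>UNIV. g a b * pmf q b * pmf M a)"
    by (simp add: sum_distrib_right)
  also have "\<dots> = (\<Sum>b\<in>UNIV. \<Sum>a\<in>UNIV. g a b * pmf q b * pmf M a)"
    by (rule sum.swap)
  also have "\<dots> = (\<Sum>b\<in>UNIV. (\<Sum>a\<in>UNIV. g a b * pmf M a) * pmf q b)"
    by (simp add: sum_distrib_right, simp add: sum_distrib_left mult_ac)
  finally show ?thesis by (simp only: pmf_exp_finite)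
qed

lemma exp_const_pmf: "measure_pmf.expectation M (\<lambda>x. c::real) = c"
  by simp

lemma rl_weight_snoc: "rl_weight p0 pstar (h @ [(a,b)]) = pstar (rl_weight p0 pstar h) b"
  by (simp add: rl_weight_def)

lemma rl_weight_range:
  assumes "p0 \<in> {0..1}" "\<And>p b. pstar p b \<in> {0..(1::real)}"
  shows "rl_weight p0 pstar h \<in> {0..1}"
proof (cases h rule: rev_cases)
  case Nil then show ?thesis using assms by (simp add: rl_weight_def)
next
  case (snoc ys y) then show ?thesis using assms by (cases y) (simp add: rl_weight_snoc)
qed


theorem corollary1:
  fixes \<phi> :: "'a::finite \<Rightarrow> 'b::finite \<Rightarrow> real"
    and \<delta> :: real
    and \<tau>p \<tau>m :: "'a pmf"
  assumes "0 \<le> \<delta>" and "\<delta> < 1"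
    and "(MAX sY. payoff_mixed \<phi> \<tau>m sY) \<le> 0"
    and "0 \<le> (MIN sY. payoff_mixed \<phi> \<tau>p sY)"
    and "(MIN sY. payoff_mixed \<phi> \<tau>p sY)
           \<ge> (1 - \<delta>) * (MAX sY. payoff_mixed \<phi> \<tau>p sY) + \<delta> * (MAX sY. payoff_mixed \<phi> \<tau>m sY)"
    and "(MAX sY. payoff_mixed \<phi> \<tau>m sY)
           \<le> \<delta> * (MIN sY. payoff_mixed \<phi> \<tau>p sY) + (1 - \<delta>) * (MIN sY. payoff_mixed \<phi> \<tau>m sY)"
  shows "\<exists>p0 pstar. p0 \<in> {0..1} \<and> (\<forall>p\<in>{0..1}. \<forall>sY. pstar p sY \<in> {0..1})
           \<and> autocratic \<phi> \<delta> (two_point_rl \<tau>p \<tau>m p0 pstar)"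
proof -
  note d0 = assms(1) and d1 = assms(2)
  define F where "F b = payoff_mixed \<phi> \<tau>p b" for b
  define G where "G b = payoff_mixed \<phi> \<tau>m b" for b
  define mP where "mP = (MIN b. F b)"
  define MX where "MX = (MAX b. F b)"
  define mm where "mm = (MIN b. G b)"
  define MM where "MM = (MAX b. G b)"
  have a3: "MM \<le> 0" and a4: "0 \<le> mP" and a5: "mP \<ge> (1-\<delta>) * MX + \<delta> * MM"
    and a6: "MM \<le> \<delta> * mP + (1-\<delta>) * mm"
    using assms(3-6) unfolding F_def G_def mP_def MX_def mm_def MM_def by auto
  have Fb: "mP \<le> F b" "F b \<le> MX" for b
    unfolding mP_def MX_def by auto
  have Gb: "mm \<le> G b" "G b \<le> MM" for b
    unfolding mm_def MM_def by auto
  define w where "w p = p * mP + (1-p) * MM" for p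
  define cl where "cl x = max 0 (min 1 x)" for x :: real
  define g where "g p b = p * F b + (1-p) * G b" for p b
  define pstar where "pstar p b = cl (((w p - (1-\<delta>) * g p b) / \<delta> - MM) / (mP - MM))" for p b
  define p0 where "p0 = cl (- MM / (mP - MM))"
  have cl01: "cl x \<in> {0..1}" for x unfolding cl_def by auto
  have clid: "x \<in> {0..1} \<Longrightarrow> cl x = x" for x unfolding cl_def by auto
  have wp0: "w p0 = 0"
  proof (cases "mP = MM")
    case True then show ?thesis using a3 a4 by (simp add: w_def algebra_simps)
  next
    case False
    hence pos: "mP - MM > 0" using a3 a4 by auto
    have "- MM / (mP - MM) \<in> {0..1}" using pos a3 a4 by (auto simp: field_simps)
    hence "p0 = - MM / (mP - MM)" unfolding p0_def by (rule clid)
    then show ?thesis using pos by (simp add: w_def field_simps)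
  qed
  have keyA: "\<delta> * w (pstar p b) = w p - (1-\<delta>) * g p b" if p: "0 \<le> p" "p \<le> 1" for p b
  proof -
    define E where "E = w p - (1-\<delta>) * g p b"
    have f1: "0 \<le> mP - (1-\<delta>) * F b - \<delta> * MM"
      using a5 mult_left_mono[OF Fb(2)[of b], of "1-\<delta>"] d1 by linarith
    have f2: "0 \<le> (1-\<delta>) * (MM - G b)" using Gb(2)[of b] d1 by simp
    have "E - \<delta> * MM = p * (mP - (1-\<delta>) * F b - \<delta> * MM) + (1-p) * ((1-\<delta>) * (MM - G b))"
      unfolding E_def w_def g_def by (simp add: algebra_simps)
    also have "\<dots> \<ge> 0" using f1 f2 p by simp
    finally have lo: "\<delta> * MM \<le> E" by simp
    have f3: "0 \<le> \<delta> * mP + (1-\<delta>) * G b - MM"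
      using a6 mult_left_mono[OF Gb(1)[of b], of "1-\<delta>"] d1 by linarith
    have f4: "0 \<le> (1-\<delta>) * (F b - mP)" using Fb(1)[of b] d1 by simp
    have "\<delta> * mP - E = p * ((1-\<delta>) * (F b - mP)) + (1-p) * (\<delta> * mP + (1-\<delta>) * G b - MM)"
      unfolding E_def w_def g_def by (simp add: algebra_simps)
    also have "\<dots> \<ge> 0" using f3 f4 p by simp
    finally have hi: "E \<le> \<delta> * mP" by simp
    have "\<delta> * w (pstar p b) = E"
    proof (cases "\<delta> = 0")
      case True then show ?thesis using lo hi by (simp add: E_def)
    next
      case dpos: False
      hence dpos: "\<delta> > 0" using d0 by simp
      show ?thesis
      proof (cases "mP = MM")
        case True then show ?thesis using lo hi by (simp add: w_def algebra_simps)
      next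
        case False
        hence pos: "mP - MM > 0" using Fb(1) Gb(2) lo hi dpos
          by (smt (verit, ccfv_SIG) mult_le_cancel_left_pos)
        have lo': "MM \<le> E / \<delta>" using lo dpos by (simp add: field_simps)
        have hi': "E / \<delta> \<le> mP" using hi dpos by (simp add: field_simps)
        have "(E / \<delta> - MM) / (mP - MM) \<in> {0..1}" using pos lo' hi' by (auto simp: field_simps)
        hence "pstar p b = (E / \<delta> - MM) / (mP - MM)" unfolding pstar_def E_def[symmetric] by (rule clid)
        then show ?thesis using pos dpos by (simp add: w_def field_simps)
      qed
    qed
    then show ?thesis by (simp add: E_def)
  qed
  have pstar01: "pstar p b \<in> {0..1}" for p b unfolding pstar_def by (rule cl01)
  have p001: "p0 \<in> {0..1}" unfolding p0_def by (rule cl01)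
  define \<sigma>X where "\<sigma>X = two_point_rl \<tau>p \<tau>m p0 pstar"
  define V where "V h = w (rl_weight p0 pstar h)" for h :: "('a,'b) history"
  have rl01: "rl_weight p0 pstar h \<in> {0..1}" for h
    by (rule rl_weight_range[OF p001]) (use pstar01 in auto)
  have BV: "\<bar>V h\<bar> \<le> \<bar>mP\<bar> + \<bar>MM\<bar>" for h
  proof -
    let ?p = "rl_weight p0 pstar h"
    have "\<bar>V h\<bar> \<le> \<bar>?p * mP\<bar> + \<bar>(1 - ?p) * MM\<bar>" unfolding V_def w_def by linarith
    also have "\<dots> \<le> \<bar>mP\<bar> + \<bar>MM\<bar>" using rl01[of h]
      by (intro add_mono) (auto simp: abs_mult intro!: mult_left_le_one_le)
    finally show ?thesis .
  qed
  have Bphi: "\<bar>\<phi> a b\<bar> \<le> (\<Sum>x\<in>UNIV. \<bar>case_prod \<phi> x\<bar>)" for a b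
    using member_le_sum[of "(a,b)" UNIV "\<lambda>x. \<bar>case_prod \<phi> x\<bar>"] by simp
  have V0: "V [] = 0" unfolding V_def using wp0 by (simp add: rl_weight_def)
  have step: "(1-\<delta>) * measure_pmf.expectation (\<sigma>X h) (\<lambda>a. measure_pmf.expectation q (\<lambda>b. \<phi> a b))
        + \<delta> * measure_pmf.expectation (\<sigma>X h) (\<lambda>a. measure_pmf.expectation q (\<lambda>b. V (h @ [(a,b)]))) = V h"
    for h q
  proof -
    let ?p = "rl_weight p0 pstar h"
    have p: "0 \<le> ?p" "?p \<le> 1" using rl01[of h] by auto
    have e1: "measure_pmf.expectation (\<sigma>X h) (\<lambda>a. measure_pmf.expectation q (\<lambda>b. \<phi> a b))
        = measure_pmf.expectation q (\<lambda>b. g ?p b)"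
      unfolding \<sigma>X_def two_point_rl_def exp_swap[of "mix2 _ _ _"] exp_mix2[OF p]
      unfolding g_def F_def G_def payoff_mixed_def
      by (rule refl)
    have e2: "measure_pmf.expectation (\<sigma>X h) (\<lambda>a. measure_pmf.expectation q (\<lambda>b. V (h @ [(a,b)])))
        = measure_pmf.expectation q (\<lambda>b. w (pstar ?p b))"
      by (simp add: V_def rl_weight_snoc)
    have fin: "finite (set_pmf q)" by simp
    have "(1-\<delta>) * measure_pmf.expectation q (\<lambda>b. g ?p b) + \<delta> * measure_pmf.expectation q (\<lambda>b. w (pstar ?p b))
       = measure_pmf.expectation q (\<lambda>b. (1-\<delta>) * g ?p b + \<delta> * w (pstar ?p b))"
      by (simp add: integrable_measure_pmf_finite[OF fin])
    also have "\<dots> = measure_pmf.expectation q (\<lambda>b. w ?p)"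
      using keyA[OF p] by simp
    also have "\<dots> = V h" by (simp add: V_def)
    finally show ?thesis unfolding e1 e2 .
  qed
  have "autocratic \<phi> \<delta> \<sigma>X"
    by (rule telescoping_autocratic[OF d0 d1 Bphi BV V0 step])
  then show ?thesis unfolding \<sigma>X_def using p001 pstar01 by blast
qed

end
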